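(* Consider the dynamic composite online convex optimization setting in the context, suppose that the Regularity Assumption, the Lipschitz-likeness Assumption on $\mathbb{B}_h$, and the non-expansiveness Assumption on the maps $\Phi_t$ hold, and that $r_t$ is available so that $\hat{r}_t=r_t$. Run OptDCMD with $\hat r_t=r_t$: starting from some $y_0\in\mathbb{X}$, for $t=1,\dots,T$, $$x_t=\arg\min_{x\in\mathbb{X}}\big\{\eta_t\langle\nabla\hat{s}_t(y_{t-1}),x\rangle+\eta_t r_t(x)+\mathbb{B}_h(x,y_{t-1})\big\},$$ $$\tilde{y}_t=\arg\min_{y\in\mathbb{X}}\big\{\eta_t\langle\nabla s_t(x_t),y\rangle+\eta_t r_t(y)+\mathbb{B}_h(y,y_{t-1})\big\},\qquad y_t=\Phi_t(\tilde{y}_t),$$ with step-size $\eta_1=\eta_2=\frac{1}{2\beta}$ and $\eta_t=\sqrt{\frac{C'_{t-2}+1}{D'_{t-1}+\theta_t}}$ for $t>2$, where the parameters $\theta_t$ are chosen such that $\eta_t\le\eta_{t-1}\le\frac{1}{2\beta}$ and $\theta_t\ge\theta_{t-1}$ for all $t$. Then $$\mathbf{Reg}^d_T\le O\Big(\sqrt{(\theta_T+D'_T)(1+C'_T)}\Big),$$ where $O(\cdot)$ hides constants not depending on $T$.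
   Context: Let $\mathcal{A}$ be a Banach space with norm $\|\cdot\|$ and dual norm $\|\cdot\|_*$. Bregman divergence: $\mathbb{B}_h(x,y)=h(x)-h(y)-\langle\nabla h(y),x-y\rangle$. $f$ is $\beta$-smooth if differentiable with $\|\nabla f(x)-\nabla f(y)\|_*\le\beta\|x-y\|$. At each round $t=1,\dots,T$ the player picks $x_t\in\mathbb{X}$ and incurs $f_t=s_t+r_t$; before choosing $x_t$ it has a gradient prediction $\nabla\hat{s}_t$ of $\nabla s_t$ and dynamical models $\Phi_t:\mathbb{X}\to\mathbb{X}$ of a reference sequence $u_1,\dots,u_{T+1}\in\mathbb{X}$. Regularity Assumption: (i) $\mathbb{X}\subseteq\mathcal{A}$ convex; (ii) $h$ differentiable and 1-strongly convex on $\mathbb{X}$; (iii) each $s_t$ convex and $\beta$-smooth, each $r_t$ convex; (iv) $\mathbb{B}_h(x,y)\le R^2$ for all $x,y\in\mathbb{X}$, some $R>0$; (v) $\|\nabla s_t(x)-\nabla\hat{s}_t(x)\|_*\le\sigma<\infty$ for all $t,x$; (vi) each function prediction $\hat{r}_t$ convex with $|r_t(x)-\hat{r}_t(x)|<\infty$. Lipschitz-likeness Assumption: there is $\gamma>0$ with $\mathbb{B}_h(x,z)-\mathbb{B}_h(y,z)\le\gamma\|x-y\|$ for all $x,y,z\in\mathbb{X}$. Non-expansiveness Assumption: $\mathbb{B}_h(\Phi_t(x),\Phi_t(y))\le\mathbb{B}_h(x,y)$ for all $x,y$, $t$. Define $D'_t=\sum_{\tau=1}^t\|\nabla s_\tau(y_{\tau-1})-\nabla\hat{s}_\tau(y_{\tau-1})\|_*^2$,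 $C'_t=\sum_{\tau=1}^t\|u_{\tau+1}-\Phi_\tau(u_\tau)\|$ (with $C'_0=0$), and dynamic regret $\mathbf{Reg}^d_T=\sum_{t=1}^T f_t(x_t)-\sum_{t=1}^T f_t(u_t)$. *)

theory Defs
  imports "HOL-Analysis.Analysis"
begin

definition strongly_convex_on :: "real \<Rightarrow> 'a::real_normed_vector set \<Rightarrow> ('a \<Rightarrow> real) \<Rightarrow> bool" where
  "strongly_convex_on mu X h \<longleftrightarrow>
     (\<forall>x\<in>X. \<forall>y\<in>X. \<forall>t::real. 0 \<le> t \<and> t \<le> 1 \<longrightarrow>
        h (t *\<^sub>R x + (1 - t) *\<^sub>R y) \<le> t * h x + (1 - t) * h y - (mu / 2) * t * (1 - t) * (norm (x - y))\<^sup>2)"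

text \<open>Bregman divergence; gradients are continuous linear functionals (elements of the dual),
  whose operator norm is the dual norm.\<close>
definition bregman :: "('a::real_normed_vector \<Rightarrow> real) \<Rightarrow> ('a \<Rightarrow> ('a \<Rightarrow>\<^sub>L real)) \<Rightarrow> 'a \<Rightarrow> 'a \<Rightarrow> real" where
  "bregman h dh x y = h x - h y - blinfun_apply (dh y) (x - y)"

definition Dprime :: "(nat \<Rightarrow> 'a \<Rightarrow> ('a::real_normed_vector \<Rightarrow>\<^sub>L real)) \<Rightarrow> (nat \<Rightarrow> 'a \<Rightarrow> ('a \<Rightarrow>\<^sub>L real))
     \<Rightarrow> (nat \<Rightarrow> 'a) \<Rightarrow> nat \<Rightarrow> real" where
  "Dprime ds dsh y t = (\<Sum>\<tau>=1..t. (norm (ds \<tau> (y (\<tau> - 1)) - dsh \<tau> (y (\<tau> - 1))))\<^sup>2)"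

definition Cprime :: "(nat \<Rightarrow> 'a \<Rightarrow> 'a) \<Rightarrow> (nat \<Rightarrow> 'a::real_normed_vector) \<Rightarrow> nat \<Rightarrow> real" where
  "Cprime \<Phi> u t = (\<Sum>\<tau>=1..t. norm (u (Suc \<tau>) - \<Phi> \<tau> (u \<tau>)))"

definition eta :: "real \<Rightarrow> (nat \<Rightarrow> real) \<Rightarrow> (nat \<Rightarrow> real) \<Rightarrow> (nat \<Rightarrow> real) \<Rightarrow> nat \<Rightarrow> real" where
  "eta \<beta> C D \<theta> t = (if t \<le> 2 then 1 / (2 * \<beta>) else sqrt ((C (t - 2) + 1) / (D (t - 1) + \<theta> t)))"

definition dyn_regret :: "(nat \<Rightarrow> 'a \<Rightarrow> real) \<Rightarrow> (nat \<Rightarrow> 'a) \<Rightarrow> (nat \<Rightarrow> 'a) \<Rightarrow> nat \<Rightarrow> real" where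
  "dyn_regret f x u T = (\<Sum>t=1..T. f t (x t)) - (\<Sum>t=1..T. f t (u t))"

end

theory Submission
  imports Defs
begin

lemma deriv_le:
  fixes F :: "'a::real_normed_vector \<Rightarrow> real"
  assumes der: "(F has_derivative blinfun_apply F') (at x within X)"
    and X: "convex X" "x \<in> X" "z \<in> X"
    and ineq: "\<And>l. 0 < l \<Longrightarrow> l \<le> 1 \<Longrightarrow> F (x + l *\<^sub>R (z - x)) - F x \<le> l * (c + l * d)"
  shows "blinfun_apply F' (z - x) \<le> c"
proof -
  define p where "p = (\<lambda>l::real. x + l *\<^sub>R (z - x))"
  have p: "(p has_derivative (\<lambda>l. l *\<^sub>R (z - x))) (at 0 within {0..1})"
    unfolding p_def by (auto intro!: derivative_eq_intros)
  have img: "p ` {0..1} \<subseteq> X"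
  proof
    fix w assume "w \<in> p ` {0..1}"
    then obtain l where l: "l \<in> {0..1}" "w = p l" by auto
    have "w = (1 - l) *\<^sub>R x + l *\<^sub>R z" using l by (simp add: p_def algebra_simps)
    then show "w \<in> X" using X l unfolding convex_alt by auto
  qed
  have p0: "p 0 = x" by (simp add: p_def)
  have F2: "(F has_derivative blinfun_apply F') (at (p 0) within p ` {0..1})"
    using has_derivative_subset[OF der img] p0 by simp
  have "((F \<circ> p) has_derivative (blinfun_apply F' \<circ> (\<lambda>l. l *\<^sub>R (z - x)))) (at 0 within {0..1})"
    by (rule diff_chain_within[OF p F2])
  moreover have "(blinfun_apply F' \<circ> (\<lambda>l. l *\<^sub>R (z - x))) = (\<lambda>l. blinfun_apply F' (z - x) * l)"
    by (auto simp: blinfun.scaleR_right)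
  ultimately have "((F \<circ> p) has_field_derivative blinfun_apply F' (z - x)) (at 0 within {0..1})"
    by (simp add: has_field_derivative_def)
  then have lim: "((\<lambda>l. ((F \<circ> p) l - (F \<circ> p) 0) / (l - 0)) \<longlongrightarrow> blinfun_apply F' (z - x)) (at_right 0)"
    unfolding has_field_derivative_iff using at_within_Icc_at_right[of "0::real" 1] by simp
  have lim2: "((\<lambda>l::real. c + l * d) \<longlongrightarrow> c) (at_right 0)"
    by (auto intro!: tendsto_eq_intros)
  have ev: "\<forall>\<^sub>F l in at_right 0. ((F \<circ> p) l - (F \<circ> p) 0) / (l - 0) \<le> c + l * d"
    unfolding eventually_at_right_field
  proof (intro exI[of _ 1] conjI allI impI)
    fix l :: real assume "0 < l" "l < 1"
    then have "F (p l) - F x \<le> l * (c + l * d)" using ineq[of l] by (simp add: p_def)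
    then show "((F \<circ> p) l - (F \<circ> p) 0) / (l - 0) \<le> c + l * d"
      using \<open>0 < l\<close> p0 by (simp add: divide_le_eq mult.commute)
  qed simp
  show ?thesis by (rule tendsto_le[OF _ lim2 lim ev]) simp
qed

lemma grad_ineq:
  fixes s :: "'a::real_normed_vector \<Rightarrow> real"
  assumes "convex X" "convex_on X s" "(s has_derivative blinfun_apply g) (at x within X)" "x \<in> X" "z \<in> X"
  shows "s x + blinfun_apply g (z - x) \<le> s z"
proof -
  have "blinfun_apply g (z - x) \<le> s z - s x + 0"
  proof (rule deriv_le[OF assms(3,1,4,5), where d=0])
    fix l :: real assume l: "0 < l" "l \<le> 1"
    have "s ((1 - l) *\<^sub>R x + l *\<^sub>R z) \<le> (1 - l) * s x + l * s z"
      using convex_onD[OF assms(2), of l x z] l assms by auto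
    moreover have "(1 - l) *\<^sub>R x + l *\<^sub>R z = x + l *\<^sub>R (z - x)" by (simp add: algebra_simps)
    ultimately show "s (x + l *\<^sub>R (z - x)) - s x \<le> l * (s z - s x + 0 + l * 0)"
      by (simp add: algebra_simps)
  qed
  then show ?thesis by simp
qed

lemma breg_lower:
  fixes h :: "'a::real_normed_vector \<Rightarrow> real"
  assumes "convex X" "strongly_convex_on 1 X h" "\<forall>z\<in>X. (h has_derivative blinfun_apply (dh z)) (at z within X)"
    "x \<in> X" "y \<in> X"
  shows "(norm (x - y))\<^sup>2 / 2 \<le> bregman h dh x y"
proof -
  let ?n = "(norm (x - y))\<^sup>2"
  have "blinfun_apply (dh y) (x - y) \<le> (h x - h y - ?n / 2) + 0"
  proof (rule deriv_le[where d="?n/2"])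
    show "(h has_derivative blinfun_apply (dh y)) (at y within X)" using assms by auto
    fix l :: real assume l: "0 < l" "l \<le> 1"
    have "h (l *\<^sub>R x + (1 - l) *\<^sub>R y) \<le> l * h x + (1 - l) * h y - (1 / 2) * l * (1 - l) * ?n"
      using assms(2,4,5) l unfolding strongly_convex_on_def by auto
    moreover have "l *\<^sub>R x + (1 - l) *\<^sub>R y = y + l *\<^sub>R (x - y)" by (simp add: algebra_simps)
    ultimately show "h (y + l *\<^sub>R (x - y)) - h y \<le> l * ((h x - h y - ?n / 2) + 0 + l * (?n / 2))"
      by (simp add: algebra_simps diff_divide_distrib add_divide_distrib)
  qed (use assms in auto)
  then show ?thesis unfolding bregman_def by simp
qed

lemma three_point:
  fixes h :: "'a::real_normed_vector \<Rightarrow> real"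
  assumes X: "convex X" and hd: "\<forall>z\<in>X. (h has_derivative blinfun_apply (dh z)) (at z within X)"
    and psi: "\<And>a b l. a \<in> X \<Longrightarrow> b \<in> X \<Longrightarrow> 0 \<le> l \<Longrightarrow> l \<le> 1 \<Longrightarrow>
                 \<psi> ((1 - l) *\<^sub>R a + l *\<^sub>R b) \<le> (1 - l) * \<psi> a + l * \<psi> b"
    and am: "is_arg_min (\<lambda>z. \<psi> z + bregman h dh z y) (\<lambda>z. z \<in> X) xs"
    and y: "y \<in> X" and z: "z \<in> X"
  shows "\<psi> xs + bregman h dh xs y + bregman h dh z xs \<le> \<psi> z + bregman h dh z y"
proof -
  have xs: "xs \<in> X" using am unfolding is_arg_min_def by auto
  have min: "\<And>w. w \<in> X \<Longrightarrow> \<psi> xs + bregman h dh xs y \<le> \<psi> w + bregman h dh w y"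
    using am unfolding is_arg_min_def by (meson not_le)
  let ?c = "\<psi> z - \<psi> xs - blinfun_apply (dh y) (z - xs)"
  have "blinfun_apply (- dh xs) (z - xs) \<le> ?c + 0"
  proof (rule deriv_le[where d=0 and F="\<lambda>w. - h w"])
    show "((\<lambda>w. - h w) has_derivative blinfun_apply (- dh xs)) (at xs within X)"
    proof -
      have "((\<lambda>w. - h w) has_derivative (\<lambda>w. - blinfun_apply (dh xs) w)) (at xs within X)"
        using hd xs by (intro has_derivative_minus) auto
      moreover have "(\<lambda>w. - blinfun_apply (dh xs) w) = blinfun_apply (- dh xs)"
        by (auto simp: uminus_blinfun.rep_eq)
      ultimately show ?thesis by simp
    qed
    fix l :: real assume l: "0 < l" "l \<le> 1"
    define p where "p = (1 - l) *\<^sub>R xs + l *\<^sub>R z"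
    have pe: "p = xs + l *\<^sub>R (z - xs)" by (simp add: p_def algebra_simps)
    have pX: "p \<in> X" using X xs z l unfolding convex_alt p_def by auto
    have m: "\<psi> xs + bregman h dh xs y \<le> \<psi> p + bregman h dh p y" using min[OF pX] .
    have cv: "\<psi> p \<le> (1 - l) * \<psi> xs + l * \<psi> z" using psi[OF xs z] l p_def by auto
    have "blinfun_apply (dh y) (p - y) = blinfun_apply (dh y) (xs - y) + l * blinfun_apply (dh y) (z - xs)"
      by (simp add: pe blinfun.diff_right blinfun.add_right blinfun.scaleR_right algebra_simps)
    then have "- h p - - h xs \<le> l * ?c"
      using m cv unfolding bregman_def by (simp add: algebra_simps)
    then show "- h (xs + l *\<^sub>R (z - xs)) - - h xs \<le> l * (?c + 0 + l * 0)" by (simp add: pe)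
  qed (use X xs z in auto)
  then have key: "- blinfun_apply (dh xs) (z - xs) \<le> ?c" by (simp add: uminus_blinfun.rep_eq)
  have "blinfun_apply (dh y) (z - y) = blinfun_apply (dh y) (z - xs) + blinfun_apply (dh y) (xs - y)"
    by (simp add: blinfun.diff_right)
  then show ?thesis using key unfolding bregman_def by (simp add: algebra_simps)
qed

lemma step_bound:
  fixes h :: "'a::real_normed_vector \<Rightarrow> real"
  assumes X: "convex X" and hd: "\<forall>z\<in>X. (h has_derivative blinfun_apply (dh z)) (at z within X)"
    and sc: "strongly_convex_on 1 X h"
    and scv: "convex_on X s" and rcv: "convex_on X r"
    and sd: "\<forall>z\<in>X. (s has_derivative blinfun_apply (ds z)) (at z within X)"
    and lip: "\<forall>z\<in>X. \<forall>w\<in>X. norm (ds z - ds w) \<le> \<beta> * norm (z - w)"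
    and eta: "0 < \<eta>" "\<eta> * \<beta> \<le> 1/2" "0 \<le> \<beta>"
    and yo: "yo \<in> X" and u: "u \<in> X" and u': "u' \<in> X"
    and PhiX: "\<forall>z\<in>X. \<Phi> z \<in> X"
    and nonexp: "\<forall>z\<in>X. \<forall>w\<in>X. bregman h dh (\<Phi> z) (\<Phi> w) \<le> bregman h dh z w"
    and lipB: "\<forall>z\<in>X. \<forall>w\<in>X. \<forall>v\<in>X. bregman h dh z v - bregman h dh w v \<le> \<gamma> * norm (z - w)"
    and am1: "is_arg_min (\<lambda>z. \<eta> * blinfun_apply G z + \<eta> * r z + bregman h dh z yo) (\<lambda>z. z \<in> X) x"
    and am2: "is_arg_min (\<lambda>z. \<eta> * blinfun_apply (ds x) z + \<eta> * r z + bregman h dh z yo) (\<lambda>z. z \<in> X) yt"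
    and yn: "yn = \<Phi> yt"
  shows "s x + r x - (s u + r u) \<le> (bregman h dh u yo - bregman h dh u' yn + \<gamma> * norm (u' - \<Phi> u)) / \<eta>
            + \<eta> * (norm (ds yo - G))\<^sup>2"
proof -
  let ?B = "bregman h dh"
  let ?g = "ds x"
  have xX: "x \<in> X" using am1 unfolding is_arg_min_def by auto
  have ytX: "yt \<in> X" using am2 unfolding is_arg_min_def by auto
  have psi: "\<eta> * blinfun_apply L ((1 - l) *\<^sub>R a + l *\<^sub>R b) + \<eta> * r ((1 - l) *\<^sub>R a + l *\<^sub>R b)
      \<le> (1 - l) * (\<eta> * blinfun_apply L a + \<eta> * r a) + l * (\<eta> * blinfun_apply L b + \<eta> * r b)"
    if "a \<in> X" "b \<in> X" "0 \<le> l" "l \<le> 1" for L a b l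
  proof -
    have "r ((1 - l) *\<^sub>R a + l *\<^sub>R b) \<le> (1 - l) * r a + l * r b"
      using convex_onD[OF rcv] that by auto
    then have "\<eta> * r ((1 - l) *\<^sub>R a + l *\<^sub>R b) \<le> \<eta> * ((1 - l) * r a + l * r b)"
      using eta by (intro mult_left_mono) auto
    moreover have "\<eta> * ((1 - l) * r a + l * r b) = (1 - l) * (\<eta> * r a) + l * (\<eta> * r b)"
      by (simp add: algebra_simps)
    moreover have "\<eta> * blinfun_apply L ((1 - l) *\<^sub>R a + l *\<^sub>R b) = (1 - l) * (\<eta> * blinfun_apply L a) + l * (\<eta> * blinfun_apply L b)"
      by (simp only: blinfun.add_right blinfun.scaleR_right real_scaleR_def) (simp add: algebra_simps)
    ultimately show ?thesis by (simp only: distrib_left distrib_right)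
  qed
  have T1: "\<eta> * ?g yt + \<eta> * r yt + ?B yt yo + ?B u yt \<le> \<eta> * ?g u + \<eta> * r u + ?B u yo"
    using three_point[where \<psi>="\<lambda>z. \<eta> * blinfun_apply ?g z + \<eta> * r z", OF X hd _ am2 yo u] psi by auto
  have T2: "\<eta> * G x + \<eta> * r x + ?B x yo + ?B yt x \<le> \<eta> * G yt + \<eta> * r yt + ?B yt yo"
    using three_point[where \<psi>="\<lambda>z. \<eta> * blinfun_apply G z + \<eta> * r z", OF X hd _ am1 yo ytX] psi by auto
  have GI: "s x + ?g (u - x) \<le> s u" using grad_ineq[OF X scv _ xX u] sd xX by auto
  have BL1: "(norm (yt - x))\<^sup>2 / 2 \<le> ?B yt x" using breg_lower[OF X sc hd ytX xX] .
  have BL2: "(norm (x - yo))\<^sup>2 / 2 \<le> ?B x yo" using breg_lower[OF X sc hd xX yo] .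
  define N where "N = norm (?g - G)"
  define a where "a = norm (x - yo)"
  define b where "b = norm (x - yt)"
  define \<delta> where "\<delta> = norm (ds yo - G)"
  have CS: "(?g - G) (x - yt) \<le> N * b" unfolding N_def b_def
    using norm_blinfun[of "?g - G" "x - yt"] by simp
  have "N \<le> norm (?g - ds yo) + norm (ds yo - G)" unfolding N_def
    using norm_triangle_ineq[of "?g - ds yo" "ds yo - G"] by simp
  then have NB: "N \<le> \<beta> * a + \<delta>" using lip xX yo unfolding a_def \<delta>_def by fastforce
  have N0: "0 \<le> N" unfolding N_def by simp
  have P1: "\<eta> * N * b \<le> b\<^sup>2 / 2 + \<eta>\<^sup>2 * N\<^sup>2 / 2"
    using sum_squares_ge_zero[of "b - \<eta> * N" 0] by (simp add: power2_eq_square algebra_simps)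
  have "N\<^sup>2 \<le> (\<beta> * a + \<delta>)\<^sup>2" using NB N0 by (intro power_mono) auto
  also have "\<dots> \<le> 2 * (\<beta> * a)\<^sup>2 + 2 * \<delta>\<^sup>2"
    using sum_squares_ge_zero[of "\<beta> * a - \<delta>" 0] by (simp add: power2_eq_square algebra_simps)
  finally have "\<eta>\<^sup>2 * N\<^sup>2 \<le> \<eta>\<^sup>2 * (2 * (\<beta> * a)\<^sup>2 + 2 * \<delta>\<^sup>2)"
    by (intro mult_left_mono) auto
  then have P2: "\<eta>\<^sup>2 * N\<^sup>2 / 2 \<le> \<eta>\<^sup>2 * (\<beta> * a)\<^sup>2 + \<eta>\<^sup>2 * \<delta>\<^sup>2"
    by (simp add: algebra_simps)
  have "(\<eta> * \<beta>)\<^sup>2 \<le> (1/2)\<^sup>2" using eta by (intro power_mono) auto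
  then have "(\<eta> * \<beta>)\<^sup>2 * a\<^sup>2 \<le> (1/4) * a\<^sup>2" by (intro mult_right_mono) (auto simp: power2_eq_square)
  then have P3: "\<eta>\<^sup>2 * (\<beta> * a)\<^sup>2 \<le> a\<^sup>2 / 4" by (simp add: power_mult_distrib algebra_simps)
  have CSe: "\<eta> * (?g - G) (x - yt) \<le> \<eta> * N * b" using CS eta by (simp add: mult_left_mono)
  have lin: "(?g - G) (x - yt) = ?g x - ?g yt - (G x - G yt)"
    by (simp add: minus_blinfun.rep_eq blinfun.diff_right)
  have lin2: "?g (u - x) = ?g u - ?g x" by (simp add: blinfun.diff_right)
  have Pu: "\<Phi> u \<in> X" "\<Phi> yt \<in> X" using PhiX u ytX by auto
  have NE: "?B (\<Phi> u) (\<Phi> yt) \<le> ?B u yt" using nonexp u ytX by auto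
  have LB: "?B u' yn - ?B (\<Phi> u) yn \<le> \<gamma> * norm (u' - \<Phi> u)" using lipB u' Pu yn by auto
  have BL1': "b\<^sup>2 / 2 \<le> ?B yt x" using BL1 unfolding b_def by (simp add: norm_minus_commute)
  have ar: "\<eta> * N * b \<le> ?B yt x + ?B x yo + \<eta>\<^sup>2 * \<delta>\<^sup>2"
  proof -
    have a0: "0 \<le> a\<^sup>2" by simp
    have "a\<^sup>2 \<le> 2 * ?B x yo" using BL2 unfolding a_def by simp
    moreover have "b\<^sup>2 \<le> 2 * ?B yt x" using BL1' by simp
    ultimately show ?thesis using P1 P2 P3 a0 by linarith
  qed
  have lin': "\<eta> * (?g - G) (x - yt) = \<eta> * ?g x - \<eta> * ?g yt - \<eta> * G x + \<eta> * G yt"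
    unfolding lin by (simp add: algebra_simps)
  have GI': "\<eta> * s x + \<eta> * ?g u - \<eta> * ?g x \<le> \<eta> * s u"
  proof -
    have "\<eta> * (s x + ?g (u - x)) \<le> \<eta> * s u" using GI eta by (intro mult_left_mono) auto
    then show ?thesis using lin2 by (simp add: algebra_simps)
  qed
  have main: "\<eta> * (s x + r x - (s u + r u)) \<le> ?B u yo - ?B u' yn + \<gamma> * norm (u' - \<Phi> u) + \<eta>\<^sup>2 * \<delta>\<^sup>2"
  proof -
    have "\<eta> * (s x + r x - (s u + r u)) = \<eta> * s x + \<eta> * r x - \<eta> * s u - \<eta> * r u"
      by (simp add: algebra_simps)
    then show ?thesis using T1 T2 CSe lin' ar GI' NE[folded yn] LB by linarith
  qed
  show ?thesis using main eta unfolding \<delta>_def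
    by (simp add: field_simps power2_eq_square)
qed


lemma telescope_sum:
  fixes g :: "nat \<Rightarrow> real"
  shows "m \<le> n \<Longrightarrow> (\<Sum>t=Suc m..n. g t - g (t - 1)) = g n - g m"
proof (induction n)
  case 0 then show ?case by simp
next
  case (Suc n)
  show ?case
  proof (cases "m = Suc n")
    case True then show ?thesis by simp
  next
    case False
    then have "m \<le> n" using Suc.prems by simp
    then show ?thesis using Suc.IH by (simp add: sum.cl_ivl_Suc)
  qed
qed

lemma mono_down:
  fixes f :: "nat \<Rightarrow> real"
  assumes "\<forall>t\<in>{2..T}. f t \<le> f (t - 1)" "1 \<le> k" "k \<le> n" "n \<le> T"
  shows "f n \<le> f k"
  using assms(3,4)
proof (induction n)
  case 0 then show ?case using assms(2) by simp
next
  case (Suc n)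
  show ?case
  proof (cases "k = Suc n")
    case True then show ?thesis by simp
  next
    case False
    then have "k \<le> n" using Suc.prems by simp
    moreover have "f (Suc n) \<le> f n" using bspec[OF assms(1), of "Suc n"] Suc.prems \<open>k \<le> n\<close> assms(2) by simp
    ultimately show ?thesis using Suc.IH Suc.prems by force
  qed
qed

lemma breg_bound_dist:
  fixes h :: "'a::real_normed_vector \<Rightarrow> real"
  assumes "convex X" "strongly_convex_on 1 X h" "\<forall>z\<in>X. (h has_derivative blinfun_apply (dh z)) (at z within X)"
    "\<forall>z\<in>X. \<forall>w\<in>X. bregman h dh z w \<le> R\<^sup>2" "R > 0" "z \<in> X" "w \<in> X"
  shows "norm (z - w) \<le> 2 * R"
proof -
  have b1: "(norm (z - w))\<^sup>2 / 2 \<le> bregman h dh z w" by (rule breg_lower[OF assms(1-3,6,7)])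
  have b2: "bregman h dh z w \<le> R\<^sup>2" using assms(4,6,7) by blast
  have "(norm (z - w))\<^sup>2 / 2 \<le> R\<^sup>2" using b1 b2 by linarith
  moreover have "(2 * R)\<^sup>2 = 4 * R\<^sup>2" by (simp add: power2_eq_square)
  moreover have "0 \<le> R\<^sup>2" by simp
  ultimately have "(norm (z - w))\<^sup>2 \<le> (2 * R)\<^sup>2" by linarith
  moreover have "0 \<le> 2 * R" using assms(5) by simp
  ultimately show ?thesis by (rule power2_le_imp_le)
qed

lemma main_bound:
  fixes X :: "'a::banach set" and h :: "'a \<Rightarrow> real" and dh
    and s :: "nat \<Rightarrow> 'a \<Rightarrow> real" and ds dsh and r :: "nat \<Rightarrow> 'a \<Rightarrow> real"
    and \<Phi> :: "nat \<Rightarrow> 'a \<Rightarrow> 'a" and u :: "nat \<Rightarrow> 'a" and \<theta> :: "nat \<Rightarrow> real"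
    and x ytil y :: "nat \<Rightarrow> 'a" and T :: nat
  assumes \<beta>: "\<beta> > 0" and R: "R > 0" and \<gamma>: "\<gamma> > 0"
  and X: "convex X"
  and hd: "\<forall>z\<in>X. (h has_derivative blinfun_apply (dh z)) (at z within X)"
  and sc: "strongly_convex_on 1 X h"
  and cvx: "\<forall>t. convex_on X (s t) \<and> convex_on X (r t)"
  and sd: "\<forall>t. \<forall>z\<in>X. (s t has_derivative blinfun_apply (ds t z)) (at z within X)"
  and lip: "\<forall>t. \<forall>z\<in>X. \<forall>w\<in>X. norm (ds t z - ds t w) \<le> \<beta> * norm (z - w)"
  and RB: "\<forall>z\<in>X. \<forall>w\<in>X. bregman h dh z w \<le> R\<^sup>2"
  and sig: "\<forall>t. \<forall>z\<in>X. norm (ds t z - dsh t z) \<le> \<sigma>"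
  and lipB: "\<forall>z\<in>X. \<forall>w\<in>X. \<forall>v\<in>X. bregman h dh z v - bregman h dh w v \<le> \<gamma> * norm (z - w)"
  and PhiX: "\<forall>t. \<forall>z\<in>X. \<Phi> t z \<in> X"
  and nonexp: "\<forall>t. \<forall>z\<in>X. \<forall>w\<in>X. bregman h dh (\<Phi> t z) (\<Phi> t w) \<le> bregman h dh z w"
  and uX: "\<forall>t\<in>{1..Suc T}. u t \<in> X"
  and \<theta>pos: "\<forall>t. \<theta> t > 0"
  and etac: "\<forall>t\<in>{2..T}. eta \<beta> (Cprime \<Phi> u) (Dprime ds dsh y) \<theta> t
                        \<le> eta \<beta> (Cprime \<Phi> u) (Dprime ds dsh y) \<theta> (t - 1)
                    \<and> eta \<beta> (Cprime \<Phi> u) (Dprime ds dsh y) \<theta> (t - 1) \<le> 1 / (2 * \<beta>)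
                    \<and> \<theta> (t - 1) \<le> \<theta> t"
  and y0: "y 0 \<in> X"
  and alg: "\<forall>t\<in>{1..T}.
           is_arg_min (\<lambda>z. eta \<beta> (Cprime \<Phi> u) (Dprime ds dsh y) \<theta> t * blinfun_apply (dsh t (y (t - 1))) z
                          + eta \<beta> (Cprime \<Phi> u) (Dprime ds dsh y) \<theta> t * r t z + bregman h dh z (y (t - 1)))
                      (\<lambda>z. z \<in> X) (x t)
         \<and> is_arg_min (\<lambda>z. eta \<beta> (Cprime \<Phi> u) (Dprime ds dsh y) \<theta> t * blinfun_apply (ds t (x t)) z
                          + eta \<beta> (Cprime \<Phi> u) (Dprime ds dsh y) \<theta> t * r t z + bregman h dh z (y (t - 1)))
                      (\<lambda>z. z \<in> X) (ytil t)
         \<and> y t = \<Phi> t (ytil t)"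
  and T3: "T \<ge> 3"
  shows "dyn_regret (\<lambda>t z. s t z + r t z) x u T
           \<le> (R\<^sup>2 + \<gamma> * (1 + 4 * R) + \<sigma>\<^sup>2 / (2 * \<beta>\<^sup>2) + 2 * (1 + \<sigma>\<^sup>2 / (4 * \<beta>\<^sup>2)))
              * sqrt ((\<theta> T + Dprime ds dsh y T) * (1 + Cprime \<Phi> u T))"
proof -
  define C where "C = Cprime \<Phi> u"
  define D where "D = Dprime ds dsh y"
  define e where "e = eta \<beta> C D \<theta>"
  define \<delta> where "\<delta> = (\<lambda>t. norm (ds t (y (t - 1)) - dsh t (y (t - 1))))"
  define c where "c = (\<lambda>t. norm (u (Suc t) - \<Phi> t (u t)))"
  define Bt where "Bt = (\<lambda>t. bregman h dh (u t) (y (t - 1)))"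
  define S where "S = (\<lambda>t. \<theta> t + D t)"
  define k where "k = 1 + \<sigma>\<^sup>2 / (4 * \<beta>\<^sup>2)"
  note defs = C_def[symmetric] D_def[symmetric] e_def[symmetric]
  have C_eq: "C n = (\<Sum>t=1..n. c t)" for n unfolding C_def c_def Cprime_def by simp
  have D_eq: "D n = (\<Sum>t=1..n. (\<delta> t)\<^sup>2)" for n unfolding D_def \<delta>_def Dprime_def by simp
  have c0: "0 \<le> c t" for t unfolding c_def by simp
  have C0: "0 \<le> C n" for n unfolding C_eq by (simp add: sum_nonneg c0)
  have D0: "0 \<le> D n" for n unfolding D_eq by (simp add: sum_nonneg)
  have CSuc: "C (Suc n) = C n + c (Suc n)" for n unfolding C_eq by (simp add: sum.cl_ivl_Suc)
  have DSuc: "D (Suc n) = D n + (\<delta> (Suc n))\<^sup>2" for n unfolding D_eq by (simp add: sum.cl_ivl_Suc)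
  have Cmono: "C m \<le> C n" if "m \<le> n" for m n
    unfolding C_eq using that by (intro sum_mono2) (auto simp: c0)
  have Dmono: "D m \<le> D n" if "m \<le> n" for m n
    unfolding D_eq using that by (intro sum_mono2) auto
  have e_small: "e t = 1 / (2 * \<beta>)" if "t \<le> 2" for t unfolding e_def eta_def using that by simp
  have e_big: "e t = sqrt (C (t - 2) + 1) / sqrt (D (t - 1) + \<theta> t)" if "t > 2" for t
    unfolding e_def eta_def using that by (simp add: real_sqrt_divide)
  have e_pos: "0 < e t" for t
  proof (cases "t \<le> 2")
    case True then show ?thesis using e_small \<beta> by simp
  next
    case False
    have "0 < C (t - 2) + 1" using C0[of "t-2"] by linarith
    moreover have "0 < D (t - 1) + \<theta> t" using D0[of "t-1"] \<theta>pos[rule_format, of t] by linarith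
    ultimately show ?thesis using e_big[of t] False by simp
  qed
  have etac': "\<forall>t\<in>{2..T}. e t \<le> e (t - 1) \<and> e (t - 1) \<le> 1 / (2 * \<beta>) \<and> \<theta> (t - 1) \<le> \<theta> t"
    using etac unfolding defs .
  have e_le: "e t \<le> 1 / (2 * \<beta>)" if "1 \<le> t" "t \<le> T" for t
  proof (cases "t \<le> 2")
    case True then show ?thesis using e_small by simp
  next
    case False then have "t \<in> {2..T}" using that by auto
    then show ?thesis using etac' by fastforce
  qed
  have e_mono: "e T \<le> e t" if "1 \<le> t" "t \<le> T" for t
    using mono_down[of T e t T] etac' that by auto
  have yX: "y t \<in> X" if "t \<le> T" for t
  proof (cases t)
    case 0 then show ?thesis using y0 by simp
  next
    case (Suc n)
    then have "t \<in> {1..T}" using that by auto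
    then have "is_arg_min (\<lambda>z. e t * blinfun_apply (ds t (x t)) z + e t * r t z + bregman h dh z (y (t - 1)))
                      (\<lambda>z. z \<in> X) (ytil t)" "y t = \<Phi> t (ytil t)" using alg unfolding defs by auto
    then show ?thesis using PhiX unfolding is_arg_min_def by auto
  qed
  have \<delta>\<sigma>: "\<delta> t \<le> \<sigma>" if "1 \<le> t" "t \<le> T" for t
    unfolding \<delta>_def using sig yX[of "t - 1"] that by auto
  have \<delta>0: "0 \<le> \<delta> t" for t unfolding \<delta>_def by simp
  have step: "s t (x t) + r t (x t) - (s t (u t) + r t (u t))
      \<le> (Bt t - Bt (Suc t) + \<gamma> * c t) / e t + e t * (\<delta> t)\<^sup>2" if t: "t \<in> {1..T}" for t
  proof -
    have am: "is_arg_min (\<lambda>z. e t * blinfun_apply (dsh t (y (t - 1))) z + e t * r t z + bregman h dh z (y (t - 1)))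
                      (\<lambda>z. z \<in> X) (x t)"
      "is_arg_min (\<lambda>z. e t * blinfun_apply (ds t (x t)) z + e t * r t z + bregman h dh z (y (t - 1)))
                      (\<lambda>z. z \<in> X) (ytil t)" "y t = \<Phi> t (ytil t)" using alg t unfolding defs by auto
    have eb: "e t * \<beta> \<le> 1/2" using e_le[of t] t \<beta> by (auto simp: field_simps)
    have "s t (x t) + r t (x t) - (s t (u t) + r t (u t))
      \<le> (bregman h dh (u t) (y (t - 1)) - bregman h dh (u (Suc t)) (y t) + \<gamma> * norm (u (Suc t) - \<Phi> t (u t))) / e t
            + e t * (norm (ds t (y (t - 1)) - dsh t (y (t - 1))))\<^sup>2"
      apply (rule step_bound[where \<eta>="e t" and u="u t" and u'="u (Suc t)" and \<Phi>="\<Phi> t" and yn="y t"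
         and yt="ytil t" and x="x t" and yo="y (t - 1)" and G="dsh t (y (t - 1))" and s="s t" and r="r t"
         and ds="ds t" and \<gamma>=\<gamma> and \<beta>=\<beta> and X=X and h=h and dh=dh])
      using X hd sc e_pos eb am cvx sd lip \<beta> yX[of "t - 1"] uX t PhiX nonexp lipB by auto
    then show ?thesis unfolding Bt_def c_def \<delta>_def by simp
  qed
  have Bt0: "0 \<le> Bt t" if "1 \<le> t" "t \<le> Suc T" for t
  proof -
    have "(norm (u t - y (t - 1)))\<^sup>2 / 2 \<le> Bt t" unfolding Bt_def
      using breg_lower[OF X sc hd, of "u t" "y (t - 1)"] uX yX[of "t - 1"] that by auto
    moreover have "0 \<le> (norm (u t - y (t - 1)))\<^sup>2 / 2" by simp
    ultimately show ?thesis by linarith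
  qed
  have BtR: "Bt t \<le> R\<^sup>2" if "1 \<le> t" "t \<le> Suc T" for t
    unfolding Bt_def using RB uX yX[of "t - 1"] that by auto
  have cR: "c t \<le> 2 * R" if "1 \<le> t" "t \<le> T" for t
    unfolding c_def using breg_bound_dist[OF X sc hd RB R, of "u (Suc t)" "\<Phi> t (u t)"] uX PhiX that by auto
  have tele: "(\<Sum>t=1..n. (Bt t - Bt (Suc t)) / e t) \<le> (R\<^sup>2 - Bt (Suc n)) / e n" if "1 \<le> n" "n \<le> T" for n
    using that
  proof (induction n)
    case 0 then show ?case by simp
  next
    case (Suc n)
    show ?case
    proof (cases "n = 0")
      case True
      have "Bt 1 \<le> R\<^sup>2" using BtR[of 1] by simp
      then show ?thesis using True e_pos[of 1] by (simp add: divide_right_mono)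
    next
      case False
      have IH: "(\<Sum>t=1..n. (Bt t - Bt (Suc t)) / e t) \<le> (R\<^sup>2 - Bt (Suc n)) / e n"
        using Suc False by auto
      have "Suc n \<in> {2..T}" using Suc.prems False by auto
      then have "e (Suc n) \<le> e n" using etac' by fastforce
      then have "1 / e n \<le> 1 / e (Suc n)" using e_pos by (intro divide_left_mono) auto
      moreover have "0 \<le> R\<^sup>2 - Bt (Suc n)" using BtR[of "Suc n"] Suc.prems by auto
      ultimately have "(R\<^sup>2 - Bt (Suc n)) * (1 / e n) \<le> (R\<^sup>2 - Bt (Suc n)) * (1 / e (Suc n))"
        by (intro mult_left_mono) auto
      then have "(R\<^sup>2 - Bt (Suc n)) / e n \<le> (R\<^sup>2 - Bt (Suc n)) / e (Suc n)" by simp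
      then have "(\<Sum>t=1..Suc n. (Bt t - Bt (Suc t)) / e t)
          \<le> (R\<^sup>2 - Bt (Suc n)) / e (Suc n) + (Bt (Suc n) - Bt (Suc (Suc n))) / e (Suc n)"
        using IH by (simp add: sum.cl_ivl_Suc)
      also have "\<dots> = (R\<^sup>2 - Bt (Suc (Suc n))) / e (Suc n)" by (simp add: diff_divide_distrib)
      finally show ?thesis .
    qed
  qed
  have A: "(\<Sum>t=1..T. (Bt t - Bt (Suc t)) / e t) \<le> R\<^sup>2 / e T"
  proof -
    have "(\<Sum>t=1..T. (Bt t - Bt (Suc t)) / e t) \<le> (R\<^sup>2 - Bt (Suc T)) / e T" using tele T3 by auto
    also have "\<dots> \<le> R\<^sup>2 / e T" using Bt0[of "Suc T"] e_pos[of T] by (simp add: divide_right_mono)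
    finally show ?thesis .
  qed
  have Bc: "(\<Sum>t=1..T. \<gamma> * c t / e t) \<le> \<gamma> * C T / e T"
  proof -
    have "(\<Sum>t=1..T. \<gamma> * c t / e t) \<le> (\<Sum>t=1..T. \<gamma> * c t / e T)"
    proof (rule sum_mono)
      fix t assume "t \<in> {1..T}"
      then show "\<gamma> * c t / e t \<le> \<gamma> * c t / e T"
        using e_mono[of t] e_pos c0[of t] \<gamma> by (intro divide_left_mono) auto
    qed
    also have "\<dots> = \<gamma> * C T / e T" unfolding C_eq by (simp add: sum_divide_distrib sum_distrib_left)
    finally show ?thesis .
  qed
  define q where "q = (\<lambda>t. sqrt (C (t - 2) + 1))"
  define w where "w = (\<lambda>t. sqrt (D (t - 1) + \<theta> t))"
  define g where "g = (\<lambda>t. sqrt (S t))"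
  define sC where "sC = sqrt (1 + C T)"
  have q1: "1 \<le> q t" for t unfolding q_def using C0[of "t - 2"] by simp
  have qC: "q t \<le> sC" if "t \<le> T" for t
    unfolding q_def sC_def using Cmono[of "t - 2" T] that by simp
  have w0: "0 < w t" for t unfolding w_def using D0[of "t - 1"] \<theta>pos[rule_format, of t]
    by (simp add: add_nonneg_pos)
  have w2: "(w t)\<^sup>2 = D (t - 1) + \<theta> t" for t
    unfolding w_def using D0[of "t - 1"] \<theta>pos[rule_format, of t] by simp
  have eqw: "e t = q t / w t" if "t > 2" for t using e_big[OF that] unfolding q_def w_def by simp
  have w\<beta>: "2 * \<beta> \<le> w t" if "t \<in> {3..T}" for t
  proof -
    have "q t / w t \<le> 1 / (2 * \<beta>)" using e_le[of t] eqw[of t] that by auto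
    then have "q t * (2 * \<beta>) \<le> w t" using w0[of t] \<beta> by (simp add: field_simps)
    moreover have "2 * \<beta> \<le> q t * (2 * \<beta>)" using q1[of t] \<beta> by simp
    ultimately show ?thesis by linarith
  qed
  have S0: "0 \<le> S t" for t unfolding S_def using D0[of t] \<theta>pos[rule_format, of t] by simp
  have g0: "0 \<le> g t" for t unfolding g_def using S0[of t] by simp
  have wS: "w t \<le> g t" if "1 \<le> t" for t
  proof -
    have "D (t - 1) \<le> D t" by (rule Dmono) simp
    then show ?thesis unfolding w_def g_def S_def using S0[of t] \<theta>pos[rule_format, of t] D0[of "t - 1"] by (simp add: S_def)
  qed
  have k1: "1 \<le> k" unfolding k_def by simp
  have term3: "e t * (\<delta> t)\<^sup>2 \<le> sC * (2 * k * (g t - g (t - 1)))" if t: "t \<in> {3..T}" for t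
  proof -
    have t2: "t \<in> {2..T}" using t by auto
    have \<theta>m: "\<theta> (t - 1) \<le> \<theta> t" using etac' t2 by fastforce
    have St: "S t = (w t)\<^sup>2 + (\<delta> t)\<^sup>2"
      using DSuc[of "t - 1"] t unfolding S_def w2 by (cases t) auto
    have Sm: "S (t - 1) \<le> (w t)\<^sup>2" unfolding S_def w2 using \<theta>m by simp
    have w4: "4 * \<beta>\<^sup>2 \<le> (w t)\<^sup>2"
    proof -
      have "(2 * \<beta>)\<^sup>2 \<le> (w t)\<^sup>2" using w\<beta>[OF t] \<beta> by (intro power_mono) auto
      moreover have "(2 * \<beta>)\<^sup>2 = 4 * \<beta>\<^sup>2" by (simp add: power2_eq_square)
      ultimately show ?thesis by linarith
    qed
    have \<delta>2: "(\<delta> t)\<^sup>2 \<le> \<sigma>\<^sup>2"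
    proof -
      have "\<delta> t \<le> \<sigma>" using \<delta>\<sigma>[of t] t by auto
      then have "(\<delta> t)\<^sup>2 \<le> \<sigma>\<^sup>2" using \<delta>0[of t] by (intro power_mono) auto
      then show ?thesis .
    qed
    have "\<sigma>\<^sup>2 \<le> \<sigma>\<^sup>2 / (4 * \<beta>\<^sup>2) * (w t)\<^sup>2"
    proof -
      have "\<sigma>\<^sup>2 / (4 * \<beta>\<^sup>2) * (4 * \<beta>\<^sup>2) \<le> \<sigma>\<^sup>2 / (4 * \<beta>\<^sup>2) * (w t)\<^sup>2"
        using w4 by (intro mult_left_mono) auto
      then show ?thesis using \<beta> by simp
    qed
    then have Sk: "S t \<le> k * (w t)\<^sup>2" unfolding St k_def using \<delta>2 by (simp add: algebra_simps)
    have "g t \<le> sqrt (k * (w t)\<^sup>2)" unfolding g_def using Sk by simp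
    also have "\<dots> = sqrt k * w t" using w0[of t] by (simp add: real_sqrt_mult)
    also have "\<dots> \<le> k * w t"
    proof -
      have "sqrt k \<le> sqrt (k * k)" using k1 by (intro real_sqrt_le_mono) simp
      also have "\<dots> = k" using k1 by simp
      finally show ?thesis using w0[of t] by (intro mult_right_mono) auto
    qed
    finally have gk: "g t \<le> k * w t" .
    have gm: "g (t - 1) \<le> g t" unfolding g_def using Sm St by (simp add: add_increasing2)
    have "(\<delta> t)\<^sup>2 \<le> (g t)\<^sup>2 - (g (t - 1))\<^sup>2"
      unfolding g_def using S0[of t] S0[of "t - 1"] St Sm by simp
    also have "\<dots> = (g t - g (t - 1)) * (g t + g (t - 1))" by (simp add: power2_eq_square algebra_simps)
    also have "\<dots> \<le> (g t - g (t - 1)) * (2 * (k * w t))"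
      using gm gk g0[of "t - 1"] by (intro mult_left_mono) auto
    finally have d1: "(\<delta> t)\<^sup>2 \<le> (g t - g (t - 1)) * (2 * (k * w t))" .
    have eq1: "(g t - g (t - 1)) * (2 * (k * w t)) = (2 * k * (g t - g (t - 1))) * w t" by (simp add: algebra_simps)
    have d2: "(\<delta> t)\<^sup>2 / w t \<le> 2 * k * (g t - g (t - 1))"
      apply (subst pos_divide_le_eq[OF w0])
      using d1 eq1 by linarith
    have "e t * (\<delta> t)\<^sup>2 = q t * ((\<delta> t)\<^sup>2 / w t)" using eqw[of t] t by simp
    also have "\<dots> \<le> q t * (2 * k * (g t - g (t - 1)))" using d2 q1[of t] by (intro mult_left_mono) auto
    also have "\<dots> \<le> sC * (2 * k * (g t - g (t - 1)))"
      using qC[of t] t gm k1 by (intro mult_right_mono) auto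
    finally show ?thesis .
  qed
  have E3: "(\<Sum>t=3..T. e t * (\<delta> t)\<^sup>2) \<le> sC * (2 * k * g T)"
  proof -
    have "(\<Sum>t=3..T. e t * (\<delta> t)\<^sup>2) \<le> (\<Sum>t=3..T. sC * (2 * k * (g t - g (t - 1))))"
      by (rule sum_mono) (rule term3)
    also have "\<dots> = sC * (2 * k * (\<Sum>t=Suc 2..T. g t - g (t - 1)))"
      by (simp add: sum_distrib_left numeral_3_eq_3)
    also have "\<dots> = sC * (2 * k * (g T - g 2))" using telescope_sum[of 2 T g] T3 by simp
    also have "\<dots> \<le> sC * (2 * k * g T)"
      using g0[of 2] k1 C0[of T] by (intro mult_left_mono) (auto simp: sC_def)
    finally show ?thesis .
  qed
  have E12: "e 1 * (\<delta> 1)\<^sup>2 + e 2 * (\<delta> 2)\<^sup>2 \<le> \<sigma>\<^sup>2 / \<beta>"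
  proof -
    have "(\<delta> t)\<^sup>2 \<le> \<sigma>\<^sup>2" if "1 \<le> t" "t \<le> T" for t
      using \<delta>\<sigma>[OF that] \<delta>0[of t] by (intro power_mono) auto
    then have "(\<delta> 1)\<^sup>2 \<le> \<sigma>\<^sup>2" "(\<delta> 2)\<^sup>2 \<le> \<sigma>\<^sup>2" using T3 by auto
    then have "1 / (2 * \<beta>) * (\<delta> 1)\<^sup>2 \<le> 1 / (2 * \<beta>) * \<sigma>\<^sup>2" "1 / (2 * \<beta>) * (\<delta> 2)\<^sup>2 \<le> 1 / (2 * \<beta>) * \<sigma>\<^sup>2"
      using \<beta> by (intro mult_left_mono; simp)+
    moreover have "1 / (2 * \<beta>) * \<sigma>\<^sup>2 + 1 / (2 * \<beta>) * \<sigma>\<^sup>2 = \<sigma>\<^sup>2 / \<beta>" by simp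
    ultimately show ?thesis using e_small[of 1] e_small[of 2] by simp
  qed
  have Esplit: "(\<Sum>t=1..T. e t * (\<delta> t)\<^sup>2) = e 1 * (\<delta> 1)\<^sup>2 + e 2 * (\<delta> 2)\<^sup>2 + (\<Sum>t=3..T. e t * (\<delta> t)\<^sup>2)"
  proof -
    have "(\<Sum>t=1..T. e t * (\<delta> t)\<^sup>2) = e 1 * (\<delta> 1)\<^sup>2 + (\<Sum>t=Suc 1..T. e t * (\<delta> t)\<^sup>2)"
      using T3 by (intro sum.atLeast_Suc_atMost) auto
    moreover have "(\<Sum>t=2..T. e t * (\<delta> t)\<^sup>2) = e 2 * (\<delta> 2)\<^sup>2 + (\<Sum>t=Suc 2..T. e t * (\<delta> t)\<^sup>2)"
      using T3 by (intro sum.atLeast_Suc_atMost) auto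
    moreover have "Suc 1 = (2::nat)" "Suc 2 = (3::nat)" by simp_all
    ultimately show ?thesis by (simp only:)
  qed
  have Reg: "dyn_regret (\<lambda>t z. s t z + r t z) x u T
      \<le> (\<Sum>t=1..T. (Bt t - Bt (Suc t)) / e t) + (\<Sum>t=1..T. \<gamma> * c t / e t) + (\<Sum>t=1..T. e t * (\<delta> t)\<^sup>2)"
  proof -
    have "dyn_regret (\<lambda>t z. s t z + r t z) x u T = (\<Sum>t=1..T. s t (x t) + r t (x t) - (s t (u t) + r t (u t)))"
      unfolding dyn_regret_def by (simp add: sum_subtractf)
    also have "\<dots> \<le> (\<Sum>t=1..T. (Bt t - Bt (Suc t)) / e t + \<gamma> * c t / e t + e t * (\<delta> t)\<^sup>2)"
    proof (rule sum_mono)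
      fix t assume "t \<in> {1..T}"
      then show "s t (x t) + r t (x t) - (s t (u t) + r t (u t))
          \<le> (Bt t - Bt (Suc t)) / e t + \<gamma> * c t / e t + e t * (\<delta> t)\<^sup>2"
        using step[of t] by (simp add: add_divide_distrib)
    qed
    also have "\<dots> = (\<Sum>t=1..T. (Bt t - Bt (Suc t)) / e t) + (\<Sum>t=1..T. \<gamma> * c t / e t) + (\<Sum>t=1..T. e t * (\<delta> t)\<^sup>2)"
      by (simp add: sum.distrib)
    finally show ?thesis .
  qed
  define sS where "sS = g T"
  have T2: "T > 2" using T3 by simp
  have sC1: "1 \<le> sC" unfolding sC_def using C0[of T] by simp
  have sS\<beta>: "2 * \<beta> \<le> sS" unfolding sS_def using w\<beta>[of T] wS[of T] T3 by auto
  have wT: "w T \<le> sS" unfolding sS_def using wS[of T] T3 by simp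
  have inv_e: "1 / e T = w T / q T" using eqw[OF T2] by simp
  have iE: "1 / e T \<le> sS"
  proof -
    have "w T / q T \<le> w T" using q1[of T] w0[of T] by (simp add: divide_le_eq mult_le_cancel_left1)
    then show ?thesis using inv_e wT by linarith
  qed
  have t1: "R\<^sup>2 / e T \<le> R\<^sup>2 * sS * sC"
  proof -
    have "R\<^sup>2 / e T = R\<^sup>2 * (1 / e T)" by simp
    also have "\<dots> \<le> R\<^sup>2 * sS" using iE by (intro mult_left_mono) auto
    also have "\<dots> \<le> R\<^sup>2 * sS * sC"
    proof -
      have "0 \<le> R\<^sup>2 * sS" using sS\<beta> \<beta> by simp
      then have "R\<^sup>2 * sS * 1 \<le> R\<^sup>2 * sS * sC" by (rule mult_left_mono[OF sC1])
      then show ?thesis by simp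
    qed
    finally show ?thesis .
  qed
  have CT: "C T \<le> (1 + 4 * R) * (q T)\<^sup>2"
  proof -
    define m where "m = T - 2"
    have m: "T = Suc (Suc m)" using T3 unfolding m_def by arith
    have "C T = C m + c (Suc m) + c (Suc (Suc m))" unfolding m CSuc by simp
    also have "\<dots> \<le> C m + 2 * R + 2 * R" using cR[of "Suc m"] cR[of "Suc (Suc m)"] m by auto
    finally have "C T \<le> C (T - 2) + 4 * R" using m by simp
    moreover have "(q T)\<^sup>2 = C (T - 2) + 1" unfolding q_def using C0[of "T - 2"] by simp
    moreover have "0 \<le> C (T - 2)" by (rule C0)
    moreover have "0 \<le> R * C (T - 2)" using R C0[of "T - 2"] by simp
    ultimately show ?thesis by (simp add: algebra_simps)
  qed
  have t2: "\<gamma> * C T / e T \<le> \<gamma> * (1 + 4 * R) * sS * sC"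
  proof -
    have "C T / q T \<le> (1 + 4 * R) * q T"
      using CT q1[of T] by (simp add: divide_le_eq power2_eq_square algebra_simps)
    also have "\<dots> \<le> (1 + 4 * R) * sC" using qC[of T] R by (intro mult_left_mono) auto
    finally have a: "C T / q T \<le> (1 + 4 * R) * sC" .
    have "\<gamma> * C T / e T = \<gamma> * C T * (1 / e T)" by simp
    also have "\<dots> = \<gamma> * C T * (w T / q T)" unfolding inv_e ..
    also have "\<dots> = \<gamma> * (C T / q T) * w T" by simp
    also have "\<dots> \<le> \<gamma> * ((1 + 4 * R) * sC) * sS"
      using a wT w0[of T] \<gamma> C0[of T] q1[of T] R sC1
      by (intro mult_mono mult_left_mono) auto
    finally show ?thesis by (simp add: algebra_simps)
  qed
  have t3: "\<sigma>\<^sup>2 / \<beta> \<le> \<sigma>\<^sup>2 / (2 * \<beta>\<^sup>2) * sS * sC"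
  proof -
    have "\<sigma>\<^sup>2 / \<beta> = \<sigma>\<^sup>2 / (2 * \<beta>\<^sup>2) * (2 * \<beta>)" using \<beta> by (simp add: power2_eq_square field_simps)
    also have "\<dots> \<le> \<sigma>\<^sup>2 / (2 * \<beta>\<^sup>2) * sS" using sS\<beta> by (intro mult_left_mono) auto
    also have "\<dots> \<le> \<sigma>\<^sup>2 / (2 * \<beta>\<^sup>2) * sS * sC"
    proof -
      have "0 \<le> \<sigma>\<^sup>2 / (2 * \<beta>\<^sup>2) * sS" using sS\<beta> \<beta> by simp
      then have "\<sigma>\<^sup>2 / (2 * \<beta>\<^sup>2) * sS * 1 \<le> \<sigma>\<^sup>2 / (2 * \<beta>\<^sup>2) * sS * sC" by (rule mult_left_mono[OF sC1])
      then show ?thesis by simp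
    qed
    finally show ?thesis .
  qed
  have t4: "sC * (2 * k * g T) = 2 * k * sS * sC" unfolding sS_def by simp
  have sq: "sqrt ((\<theta> T + Dprime ds dsh y T) * (1 + Cprime \<Phi> u T)) = sS * sC"
  proof -
    have "(\<theta> T + Dprime ds dsh y T) * (1 + Cprime \<Phi> u T) = S T * (1 + C T)"
      unfolding S_def D_def C_def ..
    then show ?thesis unfolding sS_def g_def sC_def by (simp only: real_sqrt_mult)
  qed
  have "dyn_regret (\<lambda>t z. s t z + r t z) x u T
     \<le> R\<^sup>2 / e T + \<gamma> * C T / e T + (\<sigma>\<^sup>2 / \<beta> + sC * (2 * k * g T))"
    using Reg A Bc E3 E12 Esplit by linarith
  also have "\<dots> \<le> R\<^sup>2 * sS * sC + \<gamma> * (1 + 4 * R) * sS * sC + (\<sigma>\<^sup>2 / (2 * \<beta>\<^sup>2) * sS * sC + 2 * k * sS * sC)"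
    using t1 t2 t3 t4 by linarith
  also have "\<dots> = (R\<^sup>2 + \<gamma> * (1 + 4 * R) + \<sigma>\<^sup>2 / (2 * \<beta>\<^sup>2) + 2 * (1 + \<sigma>\<^sup>2 / (4 * \<beta>\<^sup>2))) * (sS * sC)"
    unfolding k_def by (simp add: algebra_simps)
  finally show ?thesis unfolding sq .
qed

theorem theorem5:
  fixes \<beta> R \<gamma> \<sigma> :: real
  assumes "\<beta> > 0" and "R > 0" and "\<gamma> > 0"
  shows "\<exists>K::real. \<forall>(X::'a::banach set) (h::'a \<Rightarrow> real) dh
            (s::nat \<Rightarrow> 'a \<Rightarrow> real) ds dsh (r::nat \<Rightarrow> 'a \<Rightarrow> real)
            (\<Phi>::nat \<Rightarrow> 'a \<Rightarrow> 'a) (u::nat \<Rightarrow> 'a) (\<theta>::nat \<Rightarrow> real)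
            (x::nat \<Rightarrow> 'a) (ytil::nat \<Rightarrow> 'a) (y::nat \<Rightarrow> 'a) (T::nat).
     (convex X
      \<and> (\<forall>z\<in>X. (h has_derivative blinfun_apply (dh z)) (at z within X))
      \<and> strongly_convex_on 1 X h
      \<and> (\<forall>t. convex_on X (s t) \<and> convex_on X (r t))
      \<and> (\<forall>t. \<forall>z\<in>X. (s t has_derivative blinfun_apply (ds t z)) (at z within X))
      \<and> (\<forall>t. \<forall>z\<in>X. \<forall>w\<in>X. norm (ds t z - ds t w) \<le> \<beta> * norm (z - w))
      \<and> (\<forall>z\<in>X. \<forall>w\<in>X. bregman h dh z w \<le> R\<^sup>2)
      \<and> (\<forall>t. \<forall>z\<in>X. norm (ds t z - dsh t z) \<le> \<sigma>)
      \<and> (\<forall>z\<in>X. \<forall>w\<in>X. \<forall>v\<in>X. bregman h dh z v - bregman h dh w v \<le> \<gamma> * norm (z - w))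
      \<and> (\<forall>t. \<forall>z\<in>X. \<Phi> t z \<in> X)
      \<and> (\<forall>t. \<forall>z\<in>X. \<forall>w\<in>X. bregman h dh (\<Phi> t z) (\<Phi> t w) \<le> bregman h dh z w)
      \<and> (\<forall>t\<in>{1..Suc T}. u t \<in> X)
      \<and> (\<forall>t. \<theta> t > 0)
      \<and> (\<forall>t\<in>{2..T}. eta \<beta> (Cprime \<Phi> u) (Dprime ds dsh y) \<theta> t
                        \<le> eta \<beta> (Cprime \<Phi> u) (Dprime ds dsh y) \<theta> (t - 1)
                    \<and> eta \<beta> (Cprime \<Phi> u) (Dprime ds dsh y) \<theta> (t - 1) \<le> 1 / (2 * \<beta>)
                    \<and> \<theta> (t - 1) \<le> \<theta> t)
      \<and> y 0 \<in> X
      \<and> (\<forall>t\<in>{1..T}.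
           is_arg_min (\<lambda>z. eta \<beta> (Cprime \<Phi> u) (Dprime ds dsh y) \<theta> t * blinfun_apply (dsh t (y (t - 1))) z
                          + eta \<beta> (Cprime \<Phi> u) (Dprime ds dsh y) \<theta> t * r t z + bregman h dh z (y (t - 1)))
                      (\<lambda>z. z \<in> X) (x t)
         \<and> is_arg_min (\<lambda>z. eta \<beta> (Cprime \<Phi> u) (Dprime ds dsh y) \<theta> t * blinfun_apply (ds t (x t)) z
                          + eta \<beta> (Cprime \<Phi> u) (Dprime ds dsh y) \<theta> t * r t z + bregman h dh z (y (t - 1)))
                      (\<lambda>z. z \<in> X) (ytil t)
         \<and> y t = \<Phi> t (ytil t))
      \<and> T \<ge> 3)
     \<longrightarrow> dyn_regret (\<lambda>t z. s t z + r t z) x u T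
           \<le> K * sqrt ((\<theta> T + Dprime ds dsh y T) * (1 + Cprime \<Phi> u T))"
    apply (rule exI[of _ "R\<^sup>2 + \<gamma> * (1 + 4 * R) + \<sigma>\<^sup>2 / (2 * \<beta>\<^sup>2) + 2 * (1 + \<sigma>\<^sup>2 / (4 * \<beta>\<^sup>2))"])
  apply (intro allI impI)
  apply (elim conjE)
  apply (rule main_bound[OF assms])
                      apply assumption+
  done

end
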